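(* Let $G=G_1\times\dots\times G_n$ be a finite group, where the subgroups $G_1,\ldots,G_n$ have pairwise coprime orders. For $\ell\in\mathbb{N}$, the group $G$ is $\ell$-tuple regular if and only if each of $G_1,\ldots,G_n$ is $\ell$-tuple regular.
   Context: For $\ell\in\mathbb{N}$, a finite group $G$ is $\ell$-tuple regular if for all tuples $(g_1,\ldots,g_\ell),(h_1,\ldots,h_\ell)\in G^\ell$ (entries may repeat) for which $g_i\mapsto h_i$ defines an isomorphism $\langle g_1,\ldots,g_\ell\rangle\to\langle h_1,\ldots,h_\ell\rangle$, there exists a bijection $\Psi\colon G\to G$ such that for every $g\in G$ the assignment $g_1\mapsto h_1,\ldots,g_\ell\mapsto h_\ell,g\mapsto\Psi(g)$ defines an isomorphism $\langle g_1,\ldots,g_\ell,g\rangle\to\langle h_1,\ldots,h_\ell,\Psi(g)\rangle$. *)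

theory Defs
  imports "HOL-Algebra.Algebra"
begin

definition defines_iso :: "('a, 'b) monoid_scheme \<Rightarrow> 'a list \<Rightarrow> 'a list \<Rightarrow> bool" where
  "defines_iso G xs ys \<longleftrightarrow> length xs = length ys \<and>
     (\<exists>\<phi>. \<phi> \<in> iso (subgroup_generated G (set xs)) (subgroup_generated G (set ys)) \<and>
          (\<forall>i < length xs. \<phi> (xs ! i) = ys ! i))"

definition tuple_regular :: "('a, 'b) monoid_scheme \<Rightarrow> nat \<Rightarrow> bool" where
  "tuple_regular G l \<longleftrightarrow>
     (\<forall>xs ys. length xs = l \<and> length ys = l \<and> set xs \<subseteq> carrier G \<and> set ys \<subseteq> carrier G \<and>
        defines_iso G xs ys \<longrightarrow>
        (\<exists>\<Psi>. bij_betw \<Psi> (carrier G) (carrier G) \<and>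
             (\<forall>g \<in> carrier G. defines_iso G (xs @ [g]) (ys @ [\<Psi> g]))))"

definition internal_direct_product :: "('a, 'b) monoid_scheme \<Rightarrow> nat \<Rightarrow> (nat \<Rightarrow> 'a set) \<Rightarrow> bool" where
  "internal_direct_product G n Gs \<longleftrightarrow>
     (\<forall>i < n. subgroup (Gs i) G) \<and>
     (\<lambda>x. foldr (\<lambda>i acc. x i \<otimes>\<^bsub>G\<^esub> acc) [0..<n] \<one>\<^bsub>G\<^esub>)
        \<in> iso (product_group {..<n} (\<lambda>i. G\<lparr>carrier := Gs i\<rparr>)) G"

end

theory Submission imports Defs begin

lemma pow_carrier_update:
  "x [^]\<^bsub>G\<lparr>carrier := H\<rparr>\<^esub> (k::nat) = x [^]\<^bsub>G\<^esub> k"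
  by (induction k) auto

lemma foldr_single:
  assumes "monoid G" "distinct js" "\<forall>j\<in>set js. j \<noteq> i \<longrightarrow> x j = \<one>\<^bsub>G\<^esub>" "x i \<in> carrier G"
  shows "foldr (\<lambda>j acc. x j \<otimes>\<^bsub>G\<^esub> acc) js \<one>\<^bsub>G\<^esub> = (if i \<in> set js then x i else \<one>\<^bsub>G\<^esub>)"
proof -
  interpret monoid G by fact
  show ?thesis using assms(2,3)
  proof (induction js)
    case Nil then show ?case by simp
  next
    case (Cons a js)
    then show ?case using assms(4) by (cases "a = i") auto
  qed
qed

lemma set_nth_image: "set xs = (\<lambda>k. xs ! k) ` {..<length xs}"
  by (auto simp: in_set_conv_nth image_iff)

locale dprod = group G for G (structure) +
  fixes n :: nat and Gs :: "nat \<Rightarrow> 'a set"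
  assumes fin: "finite (carrier G)"
  and idp: "internal_direct_product G n Gs"
  and cop: "\<And>i j. i < n \<Longrightarrow> j < n \<Longrightarrow> i \<noteq> j \<Longrightarrow> coprime (card (Gs i)) (card (Gs j))"
begin

abbreviation "GG i \<equiv> G\<lparr>carrier := Gs i\<rparr>"
abbreviation "P \<equiv> product_group {..<n} GG"
definition "Phi = (\<lambda>x. foldr (\<lambda>i acc. x i \<otimes> acc) [0..<n] \<one>)"
definition "Phinv = inv_into (carrier P) Phi"
definition "pr i g = Phinv g i"

lemma sub: "i < n \<Longrightarrow> subgroup (Gs i) G"
  using idp unfolding internal_direct_product_def by auto

lemma grpGG: "i < n \<Longrightarrow> group (GG i)"
  using sub subgroup.subgroup_is_group is_group by blast

lemma grpP: "group P"
  using grpGG by (intro product_group) auto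

lemma isoPhi: "Phi \<in> iso P G"
  using idp unfolding internal_direct_product_def Phi_def by auto

lemma ghPhi: "group_hom P G Phi"
  using isoPhi grpP is_group by (auto simp: group_hom_def group_hom_axioms_def iso_def)

lemma isoPhinv: "Phinv \<in> iso G P"
  unfolding Phinv_def by (rule group.iso_set_sym[OF grpP isoPhi])

lemma Phinv_Phi: "x \<in> carrier P \<Longrightarrow> Phinv (Phi x) = x"
proof -
  assume x: "x \<in> carrier P"
  from isoPhi have "inj_on Phi (carrier P)" by (auto simp: iso_def bij_betw_def)
  then show ?thesis unfolding Phinv_def by (rule inv_into_f_f[OF _ x])
qed

lemma Phinv_closed: "g \<in> carrier G \<Longrightarrow> Phinv g \<in> carrier P"
proof -
  assume "g \<in> carrier G"
  moreover have "Phinv \<in> carrier G \<rightarrow> carrier P" using isoPhinv unfolding iso_def hom_def by blast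
  ultimately show ?thesis by (rule funcset_mem[rotated])
qed

lemma Phi_Phinv: "g \<in> carrier G \<Longrightarrow> Phi (Phinv g) = g"
proof -
  assume g: "g \<in> carrier G"
  from isoPhi have "Phi ` carrier P = carrier G" by (auto simp: iso_def bij_betw_def)
  then show ?thesis unfolding Phinv_def by (intro f_inv_into_f[of g Phi]) (simp add: g)
qed

lemma pr_closed: "i < n \<Longrightarrow> g \<in> carrier G \<Longrightarrow> pr i g \<in> Gs i"
  unfolding pr_def using Phinv_closed by auto

lemma pr_mult: "i < n \<Longrightarrow> g \<in> carrier G \<Longrightarrow> h \<in> carrier G \<Longrightarrow> pr i (g \<otimes> h) = pr i g \<otimes> pr i h"
  unfolding pr_def using isoPhinv by (auto simp: iso_def hom_def)

lemma pr_carrier: "i < n \<Longrightarrow> g \<in> carrier G \<Longrightarrow> pr i g \<in> carrier G"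
  using pr_closed sub subgroup.subset by blast

lemma pr_hom: "i < n \<Longrightarrow> pr i \<in> hom G G"
  using pr_mult pr_carrier by (auto simp: hom_def)

lemma decomp: "g \<in> carrier G \<Longrightarrow> Phi (\<lambda>j\<in>{..<n}. pr j g) = g"
proof -
  assume g: "g \<in> carrier G"
  have "Phinv g \<in> extensional {..<n}" using Phinv_closed[OF g] by (simp add: PiE_def)
  then have "(\<lambda>j\<in>{..<n}. pr j g) = Phinv g"
    unfolding pr_def by (rule extensional_restrict)
  then show ?thesis using Phi_Phinv g by simp
qed

lemma single: "i < n \<Longrightarrow> a \<in> Gs i \<Longrightarrow> Phi (\<lambda>j\<in>{..<n}. if j = i then a else \<one>) = a"
  unfolding Phi_def by (subst foldr_single[where i=i]) (use sub subgroup.subset in auto)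

lemma single_carrier: "i < n \<Longrightarrow> a \<in> Gs i \<Longrightarrow> (\<lambda>j\<in>{..<n}. if j = i then a else \<one>) \<in> carrier P"
  unfolding carrier_product_group restrict_PiE_iff
  by (simp add: subgroup.one_closed[OF sub])

lemma pr_single: "i < n \<Longrightarrow> j < n \<Longrightarrow> a \<in> Gs i \<Longrightarrow> pr j a = (if j = i then a else \<one>)"
proof -
  assume a: "i < n" "j < n" "a \<in> Gs i"
  have "Phinv a = (\<lambda>j\<in>{..<n}. if j = i then a else \<one>)"
    using Phinv_Phi[OF single_carrier[OF a(1,3)]] single[OF a(1,3)] by simp
  then show ?thesis unfolding pr_def using a(2) by simp
qed

lemma pow_P: "x \<in> carrier P \<Longrightarrow> j < n \<Longrightarrow> (x [^]\<^bsub>P\<^esub> (k::nat)) j = x j [^] k"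
proof (induction k)
  case 0
  have "(x [^]\<^bsub>P\<^esub> (0::nat)) = \<one>\<^bsub>P\<^esub>"
    by (rule monoid.nat_pow_0[OF group.is_monoid[OF grpP]])
  then show ?case using 0 by simp
next
  case (Suc k)
  have "(x [^]\<^bsub>P\<^esub> Suc k) j = (x [^]\<^bsub>P\<^esub> k \<otimes>\<^bsub>P\<^esub> x) j"
    by (simp only: monoid.nat_pow_Suc[OF group.is_monoid[OF grpP]])
  also have "\<dots> = (x [^]\<^bsub>P\<^esub> k) j \<otimes> x j"
    using Suc.prems(2) by (simp only: mult_product_group restrict_apply' lessThan_iff) simp
  also have "\<dots> = x j [^] Suc k"
    using Suc by (simp only: nat_pow_Suc)
  finally show ?case .
qed

lemma pow_card_one: "j < n \<Longrightarrow> a \<in> Gs j \<Longrightarrow> a [^] card (Gs j) = \<one>"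
proof -
  assume j: "j < n" and a: "a \<in> Gs j"
  have "a [^]\<^bsub>GG j\<^esub> order (GG j) = \<one>\<^bsub>GG j\<^esub>"
    using group.pow_order_eq_1[OF grpGG[OF j]] a by simp
  then show ?thesis by (simp add: pow_carrier_update order_def)
qed

lemma card_pos: "j < n \<Longrightarrow> card (Gs j) > 0"
proof -
  assume j: "j < n"
  have "finite (Gs j)" using fin subgroup.subset[OF sub[OF j]] finite_subset by blast
  moreover have "Gs j \<noteq> {}" using subgroup.one_closed[OF sub[OF j]] by blast
  ultimately show ?thesis by (simp add: card_gt_0_iff)
qed

lemma exponent: "i < n \<Longrightarrow> \<exists>e::nat. (\<forall>a\<in>Gs i. a [^] e = a) \<and> (\<forall>j<n. j \<noteq> i \<longrightarrow> (\<forall>a\<in>Gs j. a [^] e = \<one>))"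
proof -
  assume i: "i < n"
  define Q where "Q = (\<Prod>j\<in>{..<n}-{i}. card (Gs j))"
  have "Q \<noteq> 0" unfolding Q_def using card_pos by (simp add: prod_zero_iff) 
  have "coprime Q (card (Gs i))" unfolding Q_def
    by (rule prod_coprime_left) (use cop i in auto)
  then obtain k t where kt: "Q * k = card (Gs i) * t + 1"
    using bezout_nat[OF \<open>Q \<noteq> 0\<close>, of "card (Gs i)"] by auto
  have A: "a [^] (Q * k) = a" if a: "a \<in> Gs i" for a
  proof -
    have ac: "a \<in> carrier G" using a subgroup.subset[OF sub[OF i]] by blast
    have "a [^] (Q * k) = (a [^] card (Gs i)) [^] t \<otimes> a [^] (1::nat)"
      unfolding kt by (simp add: nat_pow_pow[OF ac] nat_pow_mult[OF ac] ac)
    also have "\<dots> = a" using pow_card_one[OF i a] ac by simp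
    finally show ?thesis .
  qed
  have B: "a [^] (Q * k) = \<one>" if j: "j < n" "j \<noteq> i" and a: "a \<in> Gs j" for j a
  proof -
    have ac: "a \<in> carrier G" using a subgroup.subset[OF sub[OF j(1)]] by blast
    have "card (Gs j) dvd Q" unfolding Q_def using j by (intro dvd_prodI) auto
    then obtain c where c: "Q = card (Gs j) * c" by blast
    have "a [^] (Q * k) = (a [^] card (Gs j)) [^] (c * k)"
      unfolding c by (simp add: nat_pow_pow[OF ac] mult.assoc)
    also have "\<dots> = \<one>" using pow_card_one[OF j(1) a] by simp
    finally show ?thesis .
  qed
  show ?thesis using A B by blast
qed

lemma pr_pow: "i < n \<Longrightarrow> \<exists>e. \<forall>g\<in>carrier G. pr i g = g [^] (e::nat)"
proof -
  assume i: "i < n"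
  obtain e :: nat where e1: "\<forall>a\<in>Gs i. a [^] e = a" and e2: "\<forall>j<n. j \<noteq> i \<longrightarrow> (\<forall>a\<in>Gs j. a [^] e = \<one>)"
    using exponent[OF i] by blast
  have "pr i g = g [^] e" if g: "g \<in> carrier G" for g
  proof -
    have gh: "group_hom G P Phinv" using isoPhinv grpP is_group
      by (auto simp: group_hom_def group_hom_axioms_def iso_def)
    have "Phinv (g [^] e) = Phinv g [^]\<^bsub>P\<^esub> e"
      by (rule group_hom.hom_nat_pow[OF gh g])
    also have "\<dots> = (\<lambda>j\<in>{..<n}. if j = i then pr i g else \<one>)"
    proof (rule extensionalityI[where A="{..<n}"])
      show "Phinv g [^]\<^bsub>P\<^esub> e \<in> extensional {..<n}"
        using monoid.nat_pow_closed[OF group.is_monoid[OF grpP] Phinv_closed[OF g]] by (simp add: PiE_def)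
      fix j assume "j \<in> {..<n}"
      then have j: "j < n" by simp
      have "(Phinv g [^]\<^bsub>P\<^esub> e) j = pr j g [^] e"
        unfolding pr_def by (rule pow_P[OF Phinv_closed[OF g] j])
      also have "\<dots> = (if j = i then pr i g else \<one>)"
        using e1 e2 pr_closed[OF j g] pr_closed[OF i g] j by auto
      finally show "(Phinv g [^]\<^bsub>P\<^esub> e) j = (\<lambda>j\<in>{..<n}. if j = i then pr i g else \<one>) j"
        using j by simp
    qed auto
    finally have "Phinv (g [^] e) = (\<lambda>j\<in>{..<n}. if j = i then pr i g else \<one>)" .
    then have "Phi (Phinv (g [^] e)) = pr i g" using single[OF i pr_closed[OF i g]] by simp
    then show ?thesis using Phi_Phinv[of "g [^] e"] g by simp
  qed
  then show ?thesis by blast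
qed

lemma iso_gh: "group A \<Longrightarrow> group B \<Longrightarrow> f \<in> iso A B \<Longrightarrow> group_hom A B f"
  by (auto simp: group_hom_def group_hom_axioms_def iso_def)

lemma SGc: "S \<subseteq> carrier G \<Longrightarrow> carrier (subgroup_generated G S) = generate G S"
  by (simp add: carrier_subgroup_generated Int_absorb1)

lemma SG_eq: "S \<subseteq> carrier G \<Longrightarrow> subgroup_generated G S = G\<lparr>carrier := generate G S\<rparr>"
  by (simp add: subgroup_generated_def Int_absorb1)

lemma SG_self: "S \<subseteq> carrier G \<Longrightarrow> generate (subgroup_generated G S) S = generate G S"
proof -
  assume S: "S \<subseteq> carrier G"
  have "S \<subseteq> generate G S" by (rule subsetI, rule generate.incl)
  have "generate (subgroup_generated G S) S = generate (G\<lparr>carrier := generate G S\<rparr>) S"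
    by (simp only: SG_eq[OF S])
  also have "\<dots> = generate G S"
    by (rule generate_consistent[OF \<open>S \<subseteq> generate G S\<close> generate_is_subgroup[OF S]])
  finally show ?thesis .
qed

lemma SG2: "A \<subseteq> carrier G \<Longrightarrow> B \<subseteq> generate G A \<Longrightarrow>
    subgroup_generated (subgroup_generated G A) B = subgroup_generated G B"
proof -
  assume A: "A \<subseteq> carrier G" and B: "B \<subseteq> generate G A"
  have Bc: "B \<subseteq> carrier G" using B generate_incl[OF A] by blast
  have "subgroup_generated (subgroup_generated G A) B
      = G\<lparr>carrier := generate (G\<lparr>carrier := generate G A\<rparr>) (generate G A \<inter> B)\<rparr>"
    unfolding SG_eq[OF A] by (simp add: subgroup_generated_def)
  also have "\<dots> = G\<lparr>carrier := generate G B\<rparr>"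
    using B generate_consistent[OF B generate_is_subgroup[OF A]] by (simp add: Int_absorb1)
  also have "\<dots> = subgroup_generated G B" using SG_eq[OF Bc] by simp
  finally show ?thesis .
qed

lemma SG_GG: "i < n \<Longrightarrow> Y \<subseteq> Gs i \<Longrightarrow> subgroup_generated (GG i) Y = subgroup_generated G Y"
proof -
  assume i: "i < n" and Y: "Y \<subseteq> Gs i"
  have Yc: "Y \<subseteq> carrier G" using Y subgroup.subset[OF sub[OF i]] by blast
  have "subgroup_generated (GG i) Y = G\<lparr>carrier := generate (GG i) Y\<rparr>"
    using Y by (simp add: subgroup_generated_def Int_absorb1)
  also have "\<dots> = G\<lparr>carrier := generate G Y\<rparr>"
    using generate_consistent[OF Y sub[OF i]] by simp
  finally show ?thesis using SG_eq[OF Yc] by simp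
qed

lemma defiso_GG: "i < n \<Longrightarrow> set xs \<subseteq> Gs i \<Longrightarrow> set ys \<subseteq> Gs i \<Longrightarrow>
   defines_iso (GG i) xs ys = defines_iso G xs ys"
proof -
  assume a: "i < n" "set xs \<subseteq> Gs i" "set ys \<subseteq> Gs i"
  show ?thesis unfolding defines_iso_def SG_GG[OF a(1,2)] SG_GG[OF a(1,3)] ..
qed

lemma pr_gen: "i < n \<Longrightarrow> S \<subseteq> carrier G \<Longrightarrow> pr i ` generate G S = generate G (pr i ` S)"
proof -
  assume i: "i < n" and S: "S \<subseteq> carrier G"
  have "group_hom G G (pr i)" using pr_hom[OF i] is_group
    by (auto simp: group_hom_def group_hom_axioms_def)
  from group_hom.generate_img[OF this S] show ?thesis by simp
qed

lemma map_pr_sub: "i < n \<Longrightarrow> set xs \<subseteq> carrier G \<Longrightarrow> set (map (pr i) xs) \<subseteq> Gs i"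
  unfolding set_map by (rule image_subsetI, rule pr_closed) auto

lemma map_pr_carrier: "i < n \<Longrightarrow> set xs \<subseteq> carrier G \<Longrightarrow> set (map (pr i) xs) \<subseteq> carrier G"
  unfolding set_map by (rule image_subsetI, rule pr_carrier) auto

lemma L_fwd:
  assumes xs: "set xs \<subseteq> carrier G" and ys: "set ys \<subseteq> carrier G"
    and D: "defines_iso G xs ys" and i: "i < n"
  shows "defines_iso G (map (pr i) xs) (map (pr i) ys)"
proof -
  from D obtain \<phi> where len: "length xs = length ys"
    and \<phi>iso: "\<phi> \<in> iso (subgroup_generated G (set xs)) (subgroup_generated G (set ys))"
    and \<phi>x: "\<forall>k<length xs. \<phi> (xs!k) = ys!k"
    unfolding defines_iso_def by blast
  obtain e :: nat where e: "\<forall>g\<in>carrier G. pr i g = g [^] e" using pr_pow[OF i] by blast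
  define A where "A = subgroup_generated G (set xs)"
  define B where "B = subgroup_generated G (set ys)"
  have gA: "group A" and gB: "group B" unfolding A_def B_def by simp_all
  have gh: "group_hom A B \<phi>" using iso_gh[OF gA gB] \<phi>iso unfolding A_def B_def by blast
  have powA: "x [^] e \<in> carrier A" if "x \<in> carrier A" for x
  proof -
    have "x [^]\<^bsub>A\<^esub> e \<in> carrier A"
      by (rule monoid.nat_pow_closed[OF group.is_monoid[OF gA] that])
    then show ?thesis unfolding A_def by (simp add: pow_subgroup_generated)
  qed
  have powB: "x [^] e \<in> carrier B" if "x \<in> carrier B" for x
  proof -
    have "x [^]\<^bsub>B\<^esub> e \<in> carrier B"
      by (rule monoid.nat_pow_closed[OF group.is_monoid[OF gB] that])
    then show ?thesis unfolding B_def by (simp add: pow_subgroup_generated)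
  qed
  have xsA: "set xs \<subseteq> carrier A" unfolding A_def by (rule subgroup_generated_subset_carrier_subset[OF xs])
  have ysB: "set ys \<subseteq> carrier B" unfolding B_def by (rule subgroup_generated_subset_carrier_subset[OF ys])
  have sub1: "set (map (pr i) xs) \<subseteq> carrier A"
  proof (rule subsetI)
    fix y assume "y \<in> set (map (pr i) xs)"
    then obtain x where x: "x \<in> set xs" "y = pr i x" by auto
    have "x \<in> carrier G" "x \<in> carrier A" using x(1) xs xsA by auto
    then show "y \<in> carrier A" using e powA x(2) by simp
  qed
  have sub2: "set (map (pr i) ys) \<subseteq> carrier B"
  proof (rule subsetI)
    fix y assume "y \<in> set (map (pr i) ys)"
    then obtain x where x: "x \<in> set ys" "y = pr i x" by auto
    have "x \<in> carrier G" "x \<in> carrier B" using x(1) ys ysB by auto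
    then show "y \<in> carrier B" using e powB x(2) by simp
  qed
  have key: "\<phi> (pr i (xs!k)) = pr i (ys!k)" if k: "k < length xs" for k
  proof -
    have xk: "xs!k \<in> carrier A" "xs!k \<in> carrier G" using xsA xs k by auto
    have yk: "ys!k \<in> carrier G" using ys k len by auto
    have "\<phi> (pr i (xs!k)) = \<phi> ((xs!k) [^]\<^bsub>A\<^esub> e)"
      using e xk unfolding A_def by (simp add: pow_subgroup_generated)
    also have "\<dots> = \<phi> (xs!k) [^]\<^bsub>B\<^esub> e" by (rule group_hom.hom_nat_pow[OF gh xk(1)])
    also have "\<dots> = (ys!k) [^] e" using \<phi>x k unfolding B_def by (simp add: pow_subgroup_generated)
    also have "\<dots> = pr i (ys!k)" using e yk by simp
    finally show ?thesis .
  qed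
  have img: "\<phi> ` set (map (pr i) xs) = set (map (pr i) ys)"
  proof -
    have "\<phi> ` set (map (pr i) xs) = (\<lambda>k. \<phi> (pr i (xs!k))) ` {..<length xs}"
      by (subst set_nth_image) (simp add: image_image)
    also have "\<dots> = (\<lambda>k. pr i (ys!k)) ` {..<length ys}"
      using key len by (auto intro: image_cong)
    also have "\<dots> = set (map (pr i) ys)"
      by (simp only: set_map set_nth_image[of ys] image_image)
    finally show ?thesis .
  qed
  have iso2: "\<phi> \<in> iso (subgroup_generated A (set (map (pr i) xs))) (subgroup_generated B (set (map (pr i) ys)))"
    by (rule group_hom.iso_between_subgroups[OF gh _ sub1 img]) (use \<phi>iso A_def B_def in simp)
  have "subgroup_generated A (set (map (pr i) xs)) = subgroup_generated G (set (map (pr i) xs))"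
    unfolding A_def by (rule SG2[OF xs]) (use sub1 SGc[OF xs] A_def in simp)
  moreover have "subgroup_generated B (set (map (pr i) ys)) = subgroup_generated G (set (map (pr i) ys))"
    unfolding B_def by (rule SG2[OF ys]) (use sub2 SGc[OF ys] B_def in simp)
  ultimately have iso3: "\<phi> \<in> iso (subgroup_generated G (set (map (pr i) xs))) (subgroup_generated G (set (map (pr i) ys)))"
    using iso2 by simp
  show ?thesis unfolding defines_iso_def
    using iso3 key len by auto
qed

lemma L_bwd:
  assumes xs: "set xs \<subseteq> carrier G" and ys: "set ys \<subseteq> carrier G" and len: "length xs = length ys"
    and H: "\<forall>i<n. defines_iso G (map (pr i) xs) (map (pr i) ys)"
  shows "defines_iso G xs ys"
proof -
  define Si where "Si i = set (map (pr i) xs)" for i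
  define Ti where "Ti i = set (map (pr i) ys)" for i
  have "\<forall>i\<in>{..<n}. \<exists>\<phi>. \<phi> \<in> iso (subgroup_generated G (Si i)) (subgroup_generated G (Ti i)) \<and>
         (\<forall>k<length xs. \<phi> (pr i (xs!k)) = pr i (ys!k))"
  proof
    fix i assume "i \<in> {..<n}"
    then have "defines_iso G (map (pr i) xs) (map (pr i) ys)" using H by simp
    then obtain \<phi> where "\<phi> \<in> iso (subgroup_generated G (Si i)) (subgroup_generated G (Ti i))"
      and "\<forall>k<length xs. \<phi> (map (pr i) xs ! k) = map (pr i) ys ! k"
      unfolding defines_iso_def Si_def Ti_def by auto
    then show "\<exists>\<phi>. \<phi> \<in> iso (subgroup_generated G (Si i)) (subgroup_generated G (Ti i)) \<and>
         (\<forall>k<length xs. \<phi> (pr i (xs!k)) = pr i (ys!k))" using len by auto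
  qed
  from bchoice[OF this] obtain \<phi>s where \<phi>sall: "\<forall>i\<in>{..<n}. \<phi>s i \<in> iso (subgroup_generated G (Si i)) (subgroup_generated G (Ti i)) \<and>
         (\<forall>k<length xs. \<phi>s i (pr i (xs!k)) = pr i (ys!k))" by blast
  have \<phi>s: "\<And>i. i < n \<Longrightarrow> \<phi>s i \<in> iso (subgroup_generated G (Si i)) (subgroup_generated G (Ti i))"
    using \<phi>sall by simp
  have \<phi>sx: "\<And>i k. i < n \<Longrightarrow> k < length xs \<Longrightarrow> \<phi>s i (pr i (xs!k)) = pr i (ys!k)"
    using \<phi>sall by simp
  have Sic: "Si i \<subseteq> carrier G" if "i < n" for i unfolding Si_def by (rule map_pr_carrier[OF that xs])
  have Tic: "Ti i \<subseteq> carrier G" if "i < n" for i unfolding Ti_def by (rule map_pr_carrier[OF that ys])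
  have TiG: "generate G (Ti i) \<subseteq> Gs i" if "i < n" for i
    by (rule generate_subgroup_incl[OF _ sub[OF that]]) (unfold Ti_def, rule map_pr_sub[OF that ys])
  have pr_in: "pr i h \<in> generate G (Si i)" if "i < n" "h \<in> generate G (set xs)" for i h
    using pr_gen[OF that(1) xs] that(2) unfolding Si_def by auto
  have \<phi>hom: "\<phi>s i \<in> hom (subgroup_generated G (Si i)) (subgroup_generated G (Ti i))" if "i < n" for i
    using \<phi>s[OF that] by (simp add: iso_def)
  have \<phi>in: "\<phi>s i a \<in> generate G (Ti i)" if "i < n" "a \<in> generate G (Si i)" for i a
  proof -
    have "\<phi>s i \<in> carrier (subgroup_generated G (Si i)) \<rightarrow> carrier (subgroup_generated G (Ti i))"
      using \<phi>hom[OF that(1)] unfolding hom_def by blast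
    then have "\<phi>s i \<in> generate G (Si i) \<rightarrow> generate G (Ti i)"
      unfolding SGc[OF Sic[OF that(1)]] SGc[OF Tic[OF that(1)]] .
    then show ?thesis using that(2) by (rule funcset_mem)
  qed
  have \<phi>mult: "\<phi>s i (a \<otimes> b) = \<phi>s i a \<otimes> \<phi>s i b"
    if "i < n" "a \<in> generate G (Si i)" "b \<in> generate G (Si i)" for i a b
  proof -
    have "\<forall>x\<in>carrier (subgroup_generated G (Si i)). \<forall>y\<in>carrier (subgroup_generated G (Si i)).
       \<phi>s i (x \<otimes>\<^bsub>subgroup_generated G (Si i)\<^esub> y) = \<phi>s i x \<otimes>\<^bsub>subgroup_generated G (Ti i)\<^esub> \<phi>s i y"
      using \<phi>hom[OF that(1)] unfolding hom_def by blast
    then have "\<forall>x\<in>generate G (Si i). \<forall>y\<in>generate G (Si i). \<phi>s i (x \<otimes> y) = \<phi>s i x \<otimes> \<phi>s i y"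
      unfolding SGc[OF Sic[OF that(1)]] mult_subgroup_generated .
    then show ?thesis using that(2,3) by blast
  qed
  have \<phi>inj: "inj_on (\<phi>s i) (generate G (Si i))" if "i < n" for i
    using \<phi>s[OF that] SGc[OF Sic[OF that]] by (simp add: iso_def bij_betw_def)
  define v where "v h = (\<lambda>i\<in>{..<n}. \<phi>s i (pr i h))" for h
  define \<psi> where "\<psi> h = Phi (v h)" for h
  have gS: "generate G (set xs) \<subseteq> carrier G" by (rule generate_incl[OF xs])
  have v_in: "v h \<in> carrier P" if "h \<in> generate G (set xs)" for h
    unfolding v_def carrier_product_group restrict_PiE_iff
    using \<phi>in[OF _ pr_in[OF _ that]] TiG by auto
  have v_mult: "v (h1 \<otimes> h2) = v h1 \<otimes>\<^bsub>P\<^esub> v h2"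
    if hh: "h1 \<in> generate G (set xs)" "h2 \<in> generate G (set xs)" for h1 h2
  proof -
    have "\<phi>s i (pr i (h1 \<otimes> h2)) = \<phi>s i (pr i h1) \<otimes> \<phi>s i (pr i h2)" if i: "i < n" for i
    proof -
      have "h1 \<in> carrier G" "h2 \<in> carrier G" using gS hh by auto
      then have "pr i (h1 \<otimes> h2) = pr i h1 \<otimes> pr i h2" by (rule pr_mult[OF i])
      then show ?thesis using \<phi>mult[OF i pr_in[OF i hh(1)] pr_in[OF i hh(2)]] by simp
    qed
    then show ?thesis unfolding v_def by (auto simp: restrict_def)
  qed
  have gP: "group_hom P G Phi" by (rule ghPhi)
  have \<psi>_in: "\<psi> h \<in> carrier G" if "h \<in> generate G (set xs)" for h
    unfolding \<psi>_def using v_in[OF that] group_hom.hom_closed[OF gP] by blast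
  have \<psi>_mult: "\<psi> (h1 \<otimes> h2) = \<psi> h1 \<otimes> \<psi> h2"
    if "h1 \<in> generate G (set xs)" "h2 \<in> generate G (set xs)" for h1 h2
    unfolding \<psi>_def v_mult[OF that] using group_hom.hom_mult[OF gP v_in[OF that(1)] v_in[OF that(2)]] .
  have \<psi>hom: "\<psi> \<in> hom (subgroup_generated G (set xs)) G"
    unfolding hom_def SGc[OF xs] mult_subgroup_generated
  proof (intro CollectI conjI ballI)
    show "\<psi> \<in> generate G (set xs) \<rightarrow> carrier G" using \<psi>_in by (rule funcsetI)
    fix x y assume "x \<in> generate G (set xs)" "y \<in> generate G (set xs)"
    then show "\<psi> (x \<otimes> y) = \<psi> x \<otimes> \<psi> y" by (rule \<psi>_mult)
  qed
  have \<psi>x: "\<psi> (xs!k) = ys!k" if k: "k < length xs" for k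
  proof -
    have "v (xs!k) = (\<lambda>i\<in>{..<n}. pr i (ys!k))" unfolding v_def using \<phi>sx k by auto
    moreover have "ys!k \<in> carrier G" using ys k len by auto
    ultimately show ?thesis unfolding \<psi>_def using decomp by simp
  qed
  have \<psi>S: "\<psi> ` set xs = set ys"
  proof -
    have "\<psi> ` set xs = (\<lambda>k. \<psi> (xs!k)) ` {..<length xs}"
      by (simp only: set_nth_image[of xs] image_image)
    also have "\<dots> = (\<lambda>k. ys!k) ` {..<length ys}" using \<psi>x len by auto
    also have "\<dots> = set ys" by (simp only: set_nth_image[of ys])
    finally show ?thesis .
  qed
  have ghS: "group_hom (subgroup_generated G (set xs)) G \<psi>"
    using \<psi>hom is_group by (auto simp: group_hom_def group_hom_axioms_def)
  have xsS: "set xs \<subseteq> carrier (subgroup_generated G (set xs))"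
    by (rule subgroup_generated_subset_carrier_subset[OF xs])
  have \<psi>img: "\<psi> ` generate G (set xs) = generate G (set ys)"
    using group_hom.generate_img[OF ghS xsS] \<psi>S SG_self[OF xs] by simp
  have \<psi>inj: "inj_on \<psi> (generate G (set xs))"
  proof (rule inj_onI)
    fix h1 h2 assume h: "h1 \<in> generate G (set xs)" "h2 \<in> generate G (set xs)" "\<psi> h1 = \<psi> h2"
    have "Phinv (Phi (v h1)) = Phinv (Phi (v h2))" using h(3) unfolding \<psi>_def by simp
    then have vv: "v h1 = v h2" using Phinv_Phi[OF v_in[OF h(1)]] Phinv_Phi[OF v_in[OF h(2)]] by simp
    have eq\<phi>: "\<phi>s i (pr i h1) = \<phi>s i (pr i h2)" if "i < n" for i
    proof -
      have "v h1 i = v h2 i" using vv by simp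
      then show ?thesis using that unfolding v_def by simp
    qed
    have eqpr: "pr i h1 = pr i h2" if "i < n" for i
      by (rule inj_onD[OF \<phi>inj[OF that] eq\<phi>[OF that] pr_in[OF that h(1)] pr_in[OF that h(2)]])
    have res: "(\<lambda>i\<in>{..<n}. pr i h1) = (\<lambda>i\<in>{..<n}. pr i h2)"
      by (rule restrict_ext) (simp add: eqpr)
    have c: "h1 \<in> carrier G" "h2 \<in> carrier G" using gS h(1,2) by auto
    have "h1 = Phi (\<lambda>i\<in>{..<n}. pr i h1)" using decomp[OF c(1)] by simp
    also have "\<dots> = Phi (\<lambda>i\<in>{..<n}. pr i h2)" unfolding res ..
    also have "\<dots> = h2" using decomp[OF c(2)] .
    finally show "h1 = h2" .
  qed
  have h2: "\<psi> \<in> hom (subgroup_generated G (set xs)) (subgroup_generated G (set ys))"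
    unfolding hom_into_subgroup_eq_gen[OF is_group] SGc[OF xs] SGc[OF ys]
    using \<psi>hom \<psi>img by simp
  have b2: "bij_betw \<psi> (carrier (subgroup_generated G (set xs))) (carrier (subgroup_generated G (set ys)))"
    unfolding SGc[OF xs] SGc[OF ys] bij_betw_def using \<psi>inj \<psi>img by simp
  have "\<psi> \<in> iso (subgroup_generated G (set xs)) (subgroup_generated G (set ys))"
    unfolding iso_def using h2 b2 by simp
  then show ?thesis unfolding defines_iso_def
    by (intro conjI exI[where x=\<psi>] len) (simp_all add: \<psi>x)
qed

lemma L: "set xs \<subseteq> carrier G \<Longrightarrow> set ys \<subseteq> carrier G \<Longrightarrow> length xs = length ys \<Longrightarrow>
  defines_iso G xs ys \<longleftrightarrow> (\<forall>i<n. defines_iso G (map (pr i) xs) (map (pr i) ys))"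
  by (rule iffI, intro allI impI, erule (2) L_fwd, assumption, rule L_bwd)

lemma defiso_one:
  assumes D: "defines_iso G xs ys" and k: "k < length xs" and xk: "xs!k = \<one>"
  shows "ys!k = \<one>"
proof -
  from D obtain \<phi> where "\<phi> \<in> iso (subgroup_generated G (set xs)) (subgroup_generated G (set ys))"
    and \<phi>x: "\<forall>k<length xs. \<phi> (xs!k) = ys!k"
    unfolding defines_iso_def by blast
  then have gh: "group_hom (subgroup_generated G (set xs)) (subgroup_generated G (set ys)) \<phi>"
    by (intro iso_gh) simp_all
  have "\<phi> \<one> = \<one>" using group_hom.hom_one[OF gh] by simp
  moreover have "\<phi> (xs!k) = ys!k" using \<phi>x k by blast
  ultimately show ?thesis using xk by simp
qed

lemma main_fwd:
  assumes R: "tuple_regular G l" and i: "i < n"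
  shows "tuple_regular (GG i) l"
  unfolding tuple_regular_def
proof (intro allI impI)
  fix xs ys
  assume A: "length xs = l \<and> length ys = l \<and> set xs \<subseteq> carrier (GG i) \<and> set ys \<subseteq> carrier (GG i) \<and>
        defines_iso (GG i) xs ys"
  have xsG: "set xs \<subseteq> Gs i" and ysG: "set ys \<subseteq> Gs i" using A by auto
  have GsC: "Gs i \<subseteq> carrier G" using subgroup.subset[OF sub[OF i]] .
  have D: "defines_iso G xs ys" using A defiso_GG[OF i xsG ysG] by simp
  obtain \<Psi> where bij: "bij_betw \<Psi> (carrier G) (carrier G)"
    and ext: "\<forall>g\<in>carrier G. defines_iso G (xs @ [g]) (ys @ [\<Psi> g])"
  proof -
    have "set xs \<subseteq> carrier G" "set ys \<subseteq> carrier G" using xsG ysG GsC by auto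
    then show ?thesis using R[unfolded tuple_regular_def, rule_format, of xs ys] A D that by blast
  qed
  have into: "\<Psi> g \<in> Gs i" if g: "g \<in> Gs i" for g
  proof -
    have gc: "g \<in> carrier G" using g GsC by blast
    have pgc: "\<Psi> g \<in> carrier G" using bij gc by (rule bij_betw_apply)
    have xs': "set (xs @ [g]) \<subseteq> carrier G" using xsG GsC gc by auto
    have ys': "set (ys @ [\<Psi> g]) \<subseteq> carrier G" using ysG GsC pgc by auto
    have one: "pr j (\<Psi> g) = \<one>" if j: "j < n" "j \<noteq> i" for j
    proof -
      have Dj: "defines_iso G (map (pr j) (xs @ [g])) (map (pr j) (ys @ [\<Psi> g]))"
        by (rule L_fwd[OF xs' ys' bspec[OF ext gc] j(1)])
      have "map (pr j) (xs @ [g]) ! length xs = \<one>"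
        using pr_single[OF i j(1) g] j(2) by (simp add: nth_append)
      moreover have "length xs < length (map (pr j) (xs @ [g]))" by simp
      ultimately have "map (pr j) (ys @ [\<Psi> g]) ! length xs = \<one>"
        using defiso_one[OF Dj] by blast
      moreover have "length ys = length xs" using A by simp
      ultimately show ?thesis by (simp add: nth_append)
    qed
    have "(\<lambda>j\<in>{..<n}. pr j (\<Psi> g)) = (\<lambda>j\<in>{..<n}. if j = i then pr i (\<Psi> g) else \<one>)"
      by (rule restrict_ext) (simp add: one)
    then have "\<Psi> g = pr i (\<Psi> g)"
      using decomp[OF pgc] single[OF i pr_closed[OF i pgc]] by simp
    then show ?thesis using pr_closed[OF i pgc] by simp
  qed
  have injG: "inj_on \<Psi> (Gs i)"
    by (rule inj_on_subset[OF bij_betw_imp_inj_on[OF bij] GsC])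
  have finGs: "finite (Gs i)" using fin GsC finite_subset by blast
  have "\<Psi> ` Gs i = Gs i" by (rule endo_inj_surj[OF finGs _ injG]) (rule image_subsetI, rule into)
  then have bijGs: "bij_betw \<Psi> (carrier (GG i)) (carrier (GG i))"
    using injG unfolding bij_betw_def by simp
  have "defines_iso (GG i) (xs @ [g]) (ys @ [\<Psi> g])" if g: "g \<in> carrier (GG i)" for g
  proof -
    have g': "g \<in> Gs i" using g by simp
    have "g \<in> carrier G" using g' GsC by blast
    then have "defines_iso G (xs @ [g]) (ys @ [\<Psi> g])" by (rule bspec[OF ext])
    moreover have "set (xs @ [g]) \<subseteq> Gs i" "set (ys @ [\<Psi> g]) \<subseteq> Gs i" using xsG ysG g' into[OF g'] by auto
    ultimately show ?thesis using defiso_GG[OF i] by simp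
  qed
  then show "\<exists>\<Psi>. bij_betw \<Psi> (carrier (GG i)) (carrier (GG i)) \<and>
          (\<forall>g\<in>carrier (GG i). defines_iso (GG i) (xs @ [g]) (ys @ [\<Psi> g]))"
    using bijGs by blast
qed

lemma main_bwd:
  assumes R: "\<forall>i<n. tuple_regular (GG i) l"
  shows "tuple_regular G l"
  unfolding tuple_regular_def
proof (intro allI impI)
  fix xs ys
  assume A: "length xs = l \<and> length ys = l \<and> set xs \<subseteq> carrier G \<and> set ys \<subseteq> carrier G \<and>
        defines_iso G xs ys"
  have xs: "set xs \<subseteq> carrier G" and ys: "set ys \<subseteq> carrier G" and D: "defines_iso G xs ys"
    and lx: "length xs = l" and ly: "length ys = l" using A by auto
  have "\<forall>i\<in>{..<n}. \<exists>\<Psi>. bij_betw \<Psi> (Gs i) (Gs i) \<and>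
      (\<forall>g\<in>Gs i. defines_iso G (map (pr i) xs @ [g]) (map (pr i) ys @ [\<Psi> g]))"
  proof
    fix i assume "i \<in> {..<n}"
    then have i: "i < n" by simp
    have s1: "set (map (pr i) xs) \<subseteq> Gs i" by (rule map_pr_sub[OF i xs])
    have s2: "set (map (pr i) ys) \<subseteq> Gs i" by (rule map_pr_sub[OF i ys])
    have "defines_iso G (map (pr i) xs) (map (pr i) ys)" by (rule L_fwd[OF xs ys D i])
    then have Di: "defines_iso (GG i) (map (pr i) xs) (map (pr i) ys)"
      using defiso_GG[OF i s1 s2] by simp
    have Ri: "tuple_regular (GG i) l" using R i by blast
    obtain \<Psi> where b: "bij_betw \<Psi> (Gs i) (Gs i)"
      and e: "\<forall>g\<in>Gs i. defines_iso (GG i) (map (pr i) xs @ [g]) (map (pr i) ys @ [\<Psi> g])"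
      using Ri[unfolded tuple_regular_def, rule_format, of "map (pr i) xs" "map (pr i) ys"] lx ly s1 s2 Di
      by auto
    have "\<forall>g\<in>Gs i. defines_iso G (map (pr i) xs @ [g]) (map (pr i) ys @ [\<Psi> g])"
    proof
      fix g assume g: "g \<in> Gs i"
      have "\<Psi> g \<in> Gs i" using b g by (rule bij_betw_apply)
      then have "set (map (pr i) xs @ [g]) \<subseteq> Gs i" "set (map (pr i) ys @ [\<Psi> g]) \<subseteq> Gs i"
        using s1 s2 g by auto
      then show "defines_iso G (map (pr i) xs @ [g]) (map (pr i) ys @ [\<Psi> g])"
        using defiso_GG[OF i] bspec[OF e g] by simp
    qed
    then show "\<exists>\<Psi>. bij_betw \<Psi> (Gs i) (Gs i) \<and>
      (\<forall>g\<in>Gs i. defines_iso G (map (pr i) xs @ [g]) (map (pr i) ys @ [\<Psi> g]))" using b by blast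
  qed
  from bchoice[OF this] obtain \<Psi>s where \<Psi>sall: "\<forall>i\<in>{..<n}. bij_betw (\<Psi>s i) (Gs i) (Gs i) \<and>
      (\<forall>g\<in>Gs i. defines_iso G (map (pr i) xs @ [g]) (map (pr i) ys @ [\<Psi>s i g]))" by blast
  have \<Psi>sb: "bij_betw (\<Psi>s i) (Gs i) (Gs i)" if "i < n" for i using \<Psi>sall that by simp
  have \<Psi>se: "defines_iso G (map (pr i) xs @ [g]) (map (pr i) ys @ [\<Psi>s i g])"
    if "i < n" "g \<in> Gs i" for i g using \<Psi>sall that by simp
  define w where "w g = (\<lambda>i\<in>{..<n}. \<Psi>s i (pr i g))" for g
  define \<Psi> where "\<Psi> g = Phi (w g)" for g
  have w_in: "w g \<in> carrier P" if g: "g \<in> carrier G" for g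
  proof -
    have "\<Psi>s i (pr i g) \<in> Gs i" if i: "i < n" for i
      by (rule bij_betw_apply[OF \<Psi>sb[OF i] pr_closed[OF i g]])
    then show ?thesis unfolding w_def carrier_product_group restrict_PiE_iff by simp
  qed
  have gP: "group_hom P G Phi" by (rule ghPhi)
  have \<Psi>_in: "\<Psi> g \<in> carrier G" if "g \<in> carrier G" for g
    unfolding \<Psi>_def using w_in[OF that] group_hom.hom_closed[OF gP] by blast
  have pr\<Psi>: "pr i (\<Psi> g) = \<Psi>s i (pr i g)" if "i < n" "g \<in> carrier G" for i g
  proof -
    have "pr i (\<Psi> g) = Phinv (Phi (w g)) i" unfolding pr_def \<Psi>_def ..
    also have "\<dots> = w g i" using Phinv_Phi[OF w_in[OF that(2)]] by simp
    also have "\<dots> = \<Psi>s i (pr i g)" unfolding w_def using that(1) by simp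
    finally show ?thesis .
  qed
  have inj: "inj_on \<Psi> (carrier G)"
  proof (rule inj_onI)
    fix h1 h2 assume h: "h1 \<in> carrier G" "h2 \<in> carrier G" "\<Psi> h1 = \<Psi> h2"
    have eqpr: "pr i h1 = pr i h2" if i: "i < n" for i
    proof -
      have "\<Psi>s i (pr i h1) = \<Psi>s i (pr i h2)" using pr\<Psi>[OF i h(1)] pr\<Psi>[OF i h(2)] h(3) by simp
      then show ?thesis
        by (rule inj_onD[OF bij_betw_imp_inj_on[OF \<Psi>sb[OF i]] _ pr_closed[OF i h(1)] pr_closed[OF i h(2)]])
    qed
    have res: "(\<lambda>i\<in>{..<n}. pr i h1) = (\<lambda>i\<in>{..<n}. pr i h2)"
      by (rule restrict_ext) (simp add: eqpr)
    have "h1 = Phi (\<lambda>i\<in>{..<n}. pr i h1)" using decomp[OF h(1)] by simp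
    also have "\<dots> = Phi (\<lambda>i\<in>{..<n}. pr i h2)" unfolding res ..
    also have "\<dots> = h2" using decomp[OF h(2)] .
    finally show "h1 = h2" .
  qed
  have "\<Psi> ` carrier G = carrier G"
    by (rule endo_inj_surj[OF fin _ inj]) (rule image_subsetI, rule \<Psi>_in)
  then have bij: "bij_betw \<Psi> (carrier G) (carrier G)" using inj unfolding bij_betw_def by simp
  have "defines_iso G (xs @ [g]) (ys @ [\<Psi> g])" if g: "g \<in> carrier G" for g
  proof (rule L_bwd)
    show "set (xs @ [g]) \<subseteq> carrier G" using xs g by simp
    show "set (ys @ [\<Psi> g]) \<subseteq> carrier G" using ys \<Psi>_in[OF g] by simp
    show "length (xs @ [g]) = length (ys @ [\<Psi> g])" using lx ly by simp
    show "\<forall>i<n. defines_iso G (map (pr i) (xs @ [g])) (map (pr i) (ys @ [\<Psi> g]))"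
    proof (intro allI impI)
      fix i assume i: "i < n"
      show "defines_iso G (map (pr i) (xs @ [g])) (map (pr i) (ys @ [\<Psi> g]))"
        using \<Psi>se[OF i pr_closed[OF i g]] pr\<Psi>[OF i g] by simp
    qed
  qed
  then show "\<exists>\<Psi>. bij_betw \<Psi> (carrier G) (carrier G) \<and>
          (\<forall>g\<in>carrier G. defines_iso G (xs @ [g]) (ys @ [\<Psi> g]))"
    using bij by blast
qed

end

theorem corollary3p3:
  fixes G :: "('a, 'b) monoid_scheme" and n :: nat and Gs :: "nat \<Rightarrow> 'a set" and l :: nat
  assumes "group G"
    and "finite (carrier G)"
    and "internal_direct_product G n Gs"
    and "\<And>i j. i < n \<Longrightarrow> j < n \<Longrightarrow> i \<noteq> j \<Longrightarrow> coprime (card (Gs i)) (card (Gs j))"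
  shows "tuple_regular G l \<longleftrightarrow> (\<forall>i < n. tuple_regular (G\<lparr>carrier := Gs i\<rparr>) l)"
proof -
  have "dprod G n Gs" unfolding dprod_def dprod_axioms_def using assms by blast
  then interpret dprod G n Gs .
  show ?thesis
  proof
    assume "tuple_regular G l"
    then show "\<forall>i < n. tuple_regular (G\<lparr>carrier := Gs i\<rparr>) l" using main_fwd by blast
  next
    assume "\<forall>i < n. tuple_regular (G\<lparr>carrier := Gs i\<rparr>) l"
    then show "tuple_regular G l" by (rule main_bwd)
  qed
qed

end
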